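(* Let $J$ be a set, let $\mathbb I=[J]^{\leq\omega}$ be the set of countable subsets of $J$ ordered by inclusion, and for $D\in\mathbb I$ let $G_D=\{\sigma\in\operatorname{Sym}(J)\mid\operatorname{supp}(\sigma)\subseteq D\}$ with the subgroup topology. Then $\{G_D\}_{D\in\mathbb I}$ (with inclusions as bonding maps) satisfies ACP, and $\operatorname{colim}_{D\in\mathbb I}G_D=\operatorname{Sym}_\omega(J)$.
   Context: $\operatorname{Sym}(J)$ is the group of permutations of $J$ with the pointwise topology induced from $J^J$, $J$ being discrete; it is a topological group. The support of $\sigma$ is $\operatorname{supp}(\sigma)=\{x\in J\mid\sigma(x)\neq x\}$, and $\operatorname{Sym}_\omega(J)$ is the subgroup of permutations with countable support, with the subspace topology. $\operatorname{colim}$ denotes the union with the colimit space topology $\{U\mid U\cap G_D\text{ open in }G_D\ \forall D\}$. ACP means that this colimit space topology coincides with the finest group topology on the union making all inclusions continuous. *)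

theory Defs
  imports "HOL-Analysis.Analysis"
begin

text \<open>The set J is modelled by the type 'a (J = UNIV).\<close>

definition supp :: "('a \<Rightarrow> 'a) \<Rightarrow> 'a set" where
  "supp \<sigma> = {x. \<sigma> x \<noteq> x}"

definition Sym :: "('a \<Rightarrow> 'a) set" where
  "Sym = {\<sigma>. bij \<sigma>}"

definition pointwise_top :: "('a \<Rightarrow> 'a) topology" where
  "pointwise_top = product_topology (\<lambda>_. discrete_topology UNIV) UNIV"

definition Sym_top :: "('a \<Rightarrow> 'a) topology" where
  "Sym_top = subtopology pointwise_top Sym"

definition Sym_omega :: "('a \<Rightarrow> 'a) set" where
  "Sym_omega = {\<sigma> \<in> Sym. countable (supp \<sigma>)}"

definition Sym_omega_top :: "('a \<Rightarrow> 'a) topology" where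
  "Sym_omega_top = subtopology Sym_top Sym_omega"

definition G :: "'a set \<Rightarrow> ('a \<Rightarrow> 'a) set" where
  "G D = {\<sigma> \<in> Sym. supp \<sigma> \<subseteq> D}"

definition G_top :: "'a set \<Rightarrow> ('a \<Rightarrow> 'a) topology" where
  "G_top D = subtopology Sym_top (G D)"

definition colim_open :: "'i set \<Rightarrow> ('i \<Rightarrow> 'b topology) \<Rightarrow> 'b set \<Rightarrow> bool" where
  "colim_open I X U \<longleftrightarrow> U \<subseteq> (\<Union>i\<in>I. topspace (X i)) \<and>
     (\<forall>i\<in>I. openin (X i) (U \<inter> topspace (X i)))"

lemma istopology_colim_open: "istopology (colim_open I X)"
proof -
  have 1: "colim_open I X (S \<inter> T)" if a: "colim_open I X S" "colim_open I X T" for S T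
  proof -
    have "openin (X i) (S \<inter> T \<inter> topspace (X i))" if "i \<in> I" for i
    proof -
      have "S \<inter> T \<inter> topspace (X i) = (S \<inter> topspace (X i)) \<inter> (T \<inter> topspace (X i))"
        by blast
      moreover have "openin (X i) (S \<inter> topspace (X i))" "openin (X i) (T \<inter> topspace (X i))"
        using a that unfolding colim_open_def by blast+
      ultimately show ?thesis by (metis openin_Int)
    qed
    moreover have "S \<inter> T \<subseteq> (\<Union>i\<in>I. topspace (X i))" using a unfolding colim_open_def by blast
    ultimately show ?thesis unfolding colim_open_def by blast
  qed
  have 2: "colim_open I X (\<Union>K)" if a: "\<forall>S\<in>K. colim_open I X S" for K
  proof -
    have "openin (X i) (\<Union>K \<inter> topspace (X i))" if "i \<in> I" for i
    proof -
      have "\<Union>K \<inter> topspace (X i) = \<Union>((\<lambda>S. S \<inter> topspace (X i)) ` K)" by blast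
      moreover have "\<forall>S\<in>K. openin (X i) (S \<inter> topspace (X i))"
        using a that unfolding colim_open_def by blast
      ultimately show ?thesis by (metis (no_types, lifting) image_iff openin_Union)
    qed
    moreover have "\<Union>K \<subseteq> (\<Union>i\<in>I. topspace (X i))" using a unfolding colim_open_def by blast
    ultimately show ?thesis unfolding colim_open_def by blast
  qed
  show ?thesis unfolding istopology_def using 1 2 by blast
qed

definition colim_topology :: "'i set \<Rightarrow> ('i \<Rightarrow> 'b topology) \<Rightarrow> 'b topology" where
  "colim_topology I X = topology (colim_open I X)"

definition perm_group_topology :: "('a \<Rightarrow> 'a) set \<Rightarrow> ('a \<Rightarrow> 'a) topology \<Rightarrow> bool" where
  "perm_group_topology H T \<longleftrightarrow> topspace T = H \<and>
     continuous_map (prod_topology T T) T (\<lambda>p. fst p \<circ> snd p) \<and>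
     continuous_map T T (\<lambda>f. inv f)"

text \<open>ACP: the colimit space topology on the union equals the finest group topology
  on the union making all inclusions continuous.\<close>
definition ACP :: "'i set \<Rightarrow> ('i \<Rightarrow> ('a \<Rightarrow> 'a) topology) \<Rightarrow> bool" where
  "ACP I X \<longleftrightarrow>
     (let H = (\<Union>i\<in>I. topspace (X i)); C = colim_topology I X in
       perm_group_topology H C \<and> (\<forall>i\<in>I. continuous_map (X i) C id) \<and>
       (\<forall>T. perm_group_topology H T \<and> (\<forall>i\<in>I. continuous_map (X i) T id) \<longrightarrow>
            (\<forall>U. openin T U \<longrightarrow> openin C U)))"

end

theory Submission imports Defs begin

lemma PiE_UNIV_eq: "Pi\<^sub>E UNIV U = Pi UNIV U"
  by (simp add: PiE_def extensional_def)

lemma pw_alt: "openin (pointwise_top :: ('a \<Rightarrow> 'a) topology) W \<longleftrightarrow>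
  (\<forall>x\<in>W. \<exists>U. finite {i \<in> UNIV. U i \<noteq> UNIV} \<and>
                (\<forall>i\<in>UNIV. openin (discrete_topology UNIV) (U i)) \<and>
                x \<in> Pi UNIV U \<and> Pi UNIV U \<subseteq> W)"
  unfolding pointwise_top_def openin_product_topology_alt PiE_UNIV_eq topspace_discrete_topology ..

lemma open_pw_1:
  assumes "openin (pointwise_top :: ('a \<Rightarrow> 'a) topology) W" "f \<in> W"
  shows "\<exists>F. finite F \<and> {g. \<forall>x\<in>F. g x = f x} \<subseteq> W"
proof -
  have "\<exists>U. finite {i \<in> UNIV. U i \<noteq> UNIV} \<and>
                (\<forall>i\<in>UNIV. openin (discrete_topology UNIV) (U i)) \<and>
                f \<in> Pi UNIV U \<and> Pi UNIV U \<subseteq> W"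
    using bspec[OF assms(1)[unfolded pw_alt] assms(2)] .
  then obtain U where U: "finite {i \<in> UNIV. U i \<noteq> UNIV}" "f \<in> Pi UNIV U" "Pi UNIV U \<subseteq> W"
    by (elim exE conjE) (rule that)
  have "{g. \<forall>x\<in>{i \<in> UNIV. U i \<noteq> UNIV}. g x = f x} \<subseteq> Pi UNIV U"
  proof (rule subsetI, rule Pi_I)
    fix g i assume g: "g \<in> {g. \<forall>x\<in>{i \<in> UNIV. U i \<noteq> UNIV}. g x = f x}"
    show "g i \<in> U i"
    proof (cases "U i = UNIV")
      case True then show ?thesis by simp
    next
      case False then have "g i = f i" using g by simp
      then show ?thesis using U(2) by (simp add: Pi_iff)
    qed
  qed
  then have "{g. \<forall>x\<in>{i \<in> UNIV. U i \<noteq> UNIV}. g x = f x} \<subseteq> W" using U(3) by (rule subset_trans)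
  then show ?thesis using U(1) by (intro exI conjI)
qed

lemma open_pw_2:
  assumes h: "\<forall>f\<in>W. \<exists>F. finite F \<and> {g. \<forall>x\<in>F. g x = f x} \<subseteq> W"
  shows "openin (pointwise_top :: ('a \<Rightarrow> 'a) topology) W"
  unfolding pw_alt
proof (intro ballI)
  fix f assume "f \<in> W"
  then obtain F where F: "finite F" "{g. \<forall>x\<in>F. g x = f x} \<subseteq> W" using h by blast
  define U where "U = (\<lambda>i. if i \<in> F then {f i} else UNIV)"
  have "{i \<in> UNIV. U i \<noteq> UNIV} \<subseteq> F" by (auto simp: U_def)
  hence "finite {i \<in> UNIV. U i \<noteq> UNIV}" using F(1) by (rule finite_subset)
  moreover have "\<forall>i\<in>UNIV. openin (discrete_topology UNIV) (U i)" by simp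
  moreover have "f \<in> Pi UNIV U" by (auto simp: U_def)
  moreover have "Pi UNIV U \<subseteq> W"
  proof
    fix g assume g: "g \<in> Pi UNIV U"
    have "\<forall>x\<in>F. g x = f x"
    proof
      fix x assume "x \<in> F"
      moreover have "g x \<in> U x" using g by (simp add: Pi_iff)
      ultimately show "g x = f x" by (simp add: U_def)
    qed
    then show "g \<in> W" using F(2) by blast
  qed
  ultimately show "\<exists>U. finite {i \<in> UNIV. U i \<noteq> UNIV} \<and>
                (\<forall>i\<in>UNIV. openin (discrete_topology UNIV) (U i)) \<and>
                f \<in> Pi UNIV U \<and> Pi UNIV U \<subseteq> W" by (intro exI conjI)
qed

lemma open_pw:
  "openin (pointwise_top :: ('a \<Rightarrow> 'a) topology) W \<longleftrightarrow>
     (\<forall>f\<in>W. \<exists>F. finite F \<and> {g. \<forall>x\<in>F. g x = f x} \<subseteq> W)"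
  using open_pw_1[of W] open_pw_2[of W] by blast

lemma open_sub:
  "openin (subtopology (pointwise_top :: ('a \<Rightarrow> 'a) topology) S) V \<longleftrightarrow>
     V \<subseteq> S \<and> (\<forall>f\<in>V. \<exists>F. finite F \<and> {g\<in>S. \<forall>x\<in>F. g x = f x} \<subseteq> V)"
proof
  assume "openin (subtopology pointwise_top S) V"
  then have "\<exists>W. openin pointwise_top W \<and> V = W \<inter> S"
    by (simp only: openin_subtopology)
  then obtain W where W: "openin pointwise_top W" "V = W \<inter> S"
    by (elim exE conjE) (rule that)
  have "\<forall>f\<in>V. \<exists>F. finite F \<and> {g\<in>S. \<forall>x\<in>F. g x = f x} \<subseteq> V"
  proof
    fix f assume "f \<in> V"
    then have "f \<in> W" using W(2) by simp
    then have "\<exists>F. finite F \<and> {g. \<forall>x\<in>F. g x = f x} \<subseteq> W"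
      by (rule open_pw_1[OF W(1)])
    then obtain F where F: "finite F" "{g. \<forall>x\<in>F. g x = f x} \<subseteq> W"
      by (elim exE conjE) (rule that)
    have "{g\<in>S. \<forall>x\<in>F. g x = f x} \<subseteq> V"
      using F(2) unfolding W(2) by auto
    with F(1) show "\<exists>F. finite F \<and> {g\<in>S. \<forall>x\<in>F. g x = f x} \<subseteq> V" by (intro exI conjI)
  qed
  moreover have "V \<subseteq> S" using W(2) by simp
  ultimately show "V \<subseteq> S \<and> (\<forall>f\<in>V. \<exists>F. finite F \<and> {g\<in>S. \<forall>x\<in>F. g x = f x} \<subseteq> V)"
    by (intro conjI)
next
  assume h: "V \<subseteq> S \<and> (\<forall>f\<in>V. \<exists>F. finite F \<and> {g\<in>S. \<forall>x\<in>F. g x = f x} \<subseteq> V)"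
  have "\<exists>Fs. \<forall>f\<in>V. finite (Fs f) \<and> {g\<in>S. \<forall>x\<in>Fs f. g x = f x} \<subseteq> V"
    using h by (intro bchoice) (elim conjE)
  then obtain Fs where Fs: "\<forall>f\<in>V. finite (Fs f) \<and> {g\<in>S. \<forall>x\<in>Fs f. g x = f x} \<subseteq> V"
    by (elim exE) (rule that)
  define W where "W = (\<Union>f\<in>V. {g. \<forall>x\<in>Fs f. g x = f x})"
  have "openin pointwise_top W"
  proof (rule open_pw_2, rule ballI)
    fix h assume "h \<in> W"
    then obtain f where f: "f \<in> V" "\<forall>x\<in>Fs f. h x = f x" unfolding W_def by auto
    have "{g. \<forall>x\<in>Fs f. g x = h x} \<subseteq> W" using f unfolding W_def by auto
    moreover have "finite (Fs f)" using Fs f(1) by simp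
    ultimately show "\<exists>F. finite F \<and> {g. \<forall>x\<in>F. g x = h x} \<subseteq> W" by (intro exI conjI)
  qed
  moreover have "V = W \<inter> S"
  proof
    show "V \<subseteq> W \<inter> S" using h unfolding W_def by auto
    show "W \<inter> S \<subseteq> V"
    proof
      fix g assume "g \<in> W \<inter> S"
      then obtain f where f: "f \<in> V" "\<forall>x\<in>Fs f. g x = f x" "g \<in> S" unfolding W_def by auto
      then have "g \<in> {g\<in>S. \<forall>x\<in>Fs f. g x = f x}" by simp
      then show "g \<in> V" using Fs f(1) by auto
    qed
  qed
  ultimately show "openin (subtopology pointwise_top S) V"
    unfolding openin_subtopology by (intro exI conjI)
qed

lemma top_pw: "topspace (pointwise_top :: ('a \<Rightarrow> 'a) topology) = UNIV"
  unfolding pointwise_top_def topspace_product_topology PiE_UNIV_eq topspace_discrete_topology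
  by simp

lemma top_sub: "topspace (subtopology (pointwise_top :: ('a \<Rightarrow> 'a) topology) S) = S"
  by (simp add: top_pw)

lemma Sym_omega_sub: "Sym_omega \<subseteq> Sym"
  unfolding Sym_omega_def by auto

lemma G_sub: "G D \<subseteq> Sym"
  unfolding G_def by auto

lemma Sym_omega_top_eq: "Sym_omega_top = subtopology pointwise_top Sym_omega"
proof -
  have e: "Sym \<inter> Sym_omega = Sym_omega" using Sym_omega_sub by auto
  show ?thesis unfolding Sym_omega_top_def Sym_top_def subtopology_subtopology e ..
qed

lemma G_top_eq: "G_top D = subtopology pointwise_top (G D)"
proof -
  have e: "Sym \<inter> G D = G D" using G_sub by auto
  show ?thesis unfolding G_top_def Sym_top_def subtopology_subtopology e ..
qed

lemma supp_comp: "supp (f \<circ> g) \<subseteq> supp f \<union> supp g"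
  unfolding supp_def by auto

lemma supp_inv: assumes "bij f" shows "supp (inv f) = supp f"
proof -
  have "inv f x = x \<longleftrightarrow> f x = x" for x
    using bij_inv_eq_iff[OF assms, of x x] by auto
  then show ?thesis unfolding supp_def by simp
qed

lemma Sym_omega_comp: assumes "f \<in> Sym_omega" "g \<in> Sym_omega" shows "f \<circ> g \<in> Sym_omega"
proof -
  have b: "bij f" "bij g" and c: "countable (supp f)" "countable (supp g)"
    using assms unfolding Sym_omega_def Sym_def by auto
  have "countable (supp (f \<circ> g))"
    using countable_subset[OF supp_comp countable_Un[OF c]] .
  moreover have "bij (f \<circ> g)" using bij_comp[OF b(2) b(1)] .
  ultimately show ?thesis unfolding Sym_omega_def Sym_def by simp
qed

lemma Sym_omega_inv: assumes "f \<in> Sym_omega" shows "inv f \<in> Sym_omega"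
proof -
  have b: "bij f" and c: "countable (supp f)"
    using assms unfolding Sym_omega_def Sym_def by auto
  have "bij (inv f)" using bij_imp_bij_inv[OF b] .
  moreover have "countable (supp (inv f))" using c supp_inv[OF b] by simp
  ultimately show ?thesis unfolding Sym_omega_def Sym_def by simp
qed

lemma Sym_omega_bij: "f \<in> Sym_omega \<Longrightarrow> bij f"
  unfolding Sym_omega_def Sym_def by simp

lemma comp_cont:
  "continuous_map (prod_topology Sym_omega_top Sym_omega_top) Sym_omega_top (\<lambda>p. fst p \<circ> snd p)"
  unfolding continuous_map_def Sym_omega_top_eq topspace_prod_topology top_sub
proof (intro conjI allI impI)
  show "(\<lambda>p. fst p \<circ> snd p) \<in> Sym_omega \<times> Sym_omega \<rightarrow> Sym_omega"
    using Sym_omega_comp by auto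
  fix V assume V: "openin (subtopology pointwise_top Sym_omega) V"
  let ?P = "{x \<in> Sym_omega \<times> Sym_omega. fst x \<circ> snd x \<in> V}"
  show "openin (prod_topology (subtopology pointwise_top Sym_omega) (subtopology pointwise_top Sym_omega)) ?P"
    unfolding openin_prod_topology_alt
  proof (intro allI impI)
    fix s t assume st: "(s, t) \<in> ?P"
    then have "s \<circ> t \<in> V" by simp
    then obtain F where F: "finite F" "{g\<in>Sym_omega. \<forall>x\<in>F. g x = (s \<circ> t) x} \<subseteq> V"
      using V unfolding open_sub by blast
    define U1 where "U1 = {s'\<in>Sym_omega. \<forall>x\<in>t ` F. s' x = s x}"
    define U2 where "U2 = {t'\<in>Sym_omega. \<forall>x\<in>F. t' x = t x}"
    have o1: "openin (subtopology pointwise_top Sym_omega) U1"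
      unfolding open_sub
    proof (intro conjI ballI)
      show "U1 \<subseteq> Sym_omega" unfolding U1_def by blast
      fix f assume "f \<in> U1"
      then have "{g\<in>Sym_omega. \<forall>x\<in>t ` F. g x = f x} \<subseteq> U1" unfolding U1_def by auto
      then show "\<exists>F'. finite F' \<and> {g\<in>Sym_omega. \<forall>x\<in>F'. g x = f x} \<subseteq> U1"
        using finite_imageI[OF F(1)] by blast
    qed
    have o2: "openin (subtopology pointwise_top Sym_omega) U2"
      unfolding open_sub
    proof (intro conjI ballI)
      show "U2 \<subseteq> Sym_omega" unfolding U2_def by blast
      fix f assume "f \<in> U2"
      then have "{g\<in>Sym_omega. \<forall>x\<in>F. g x = f x} \<subseteq> U2" unfolding U2_def by auto
      then show "\<exists>F'. finite F' \<and> {g\<in>Sym_omega. \<forall>x\<in>F'. g x = f x} \<subseteq> U2"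
        using F(1) by blast
    qed
    have s1: "s \<in> U1" and t2: "t \<in> U2" using st unfolding U1_def U2_def by auto
    have sub: "U1 \<times> U2 \<subseteq> ?P"
    proof
      fix p assume "p \<in> U1 \<times> U2"
      then obtain s' t' where p: "p = (s', t')" "s' \<in> U1" "t' \<in> U2" by blast
      have "s' \<circ> t' \<in> Sym_omega" using p Sym_omega_comp unfolding U1_def U2_def by blast
      moreover have "\<forall>x\<in>F. (s' \<circ> t') x = (s \<circ> t) x" using p(2,3) unfolding U1_def U2_def by auto
      ultimately have "s' \<circ> t' \<in> V" using F(2) by blast
      then show "p \<in> ?P" using p unfolding U1_def U2_def by auto
    qed
    have c: "openin (subtopology pointwise_top Sym_omega) U1 \<and>
       openin (subtopology pointwise_top Sym_omega) U2 \<and> s \<in> U1 \<and> t \<in> U2 \<and> U1 \<times> U2 \<subseteq> ?P"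
      by (simp only: o1 o2 s1 t2 sub simp_thms)
    show "\<exists>U1 U2. openin (subtopology pointwise_top Sym_omega) U1 \<and>
       openin (subtopology pointwise_top Sym_omega) U2 \<and> s \<in> U1 \<and> t \<in> U2 \<and> U1 \<times> U2 \<subseteq> ?P"
      apply (rule exI[of _ U1])
      apply (rule exI[of _ U2])
      by (rule c)
  qed
qed

lemma inv_cont:
  "continuous_map Sym_omega_top Sym_omega_top (\<lambda>f. inv f)"
  unfolding continuous_map_def Sym_omega_top_eq top_sub
proof (intro conjI allI impI)
  show "(\<lambda>f. inv f) \<in> Sym_omega \<rightarrow> Sym_omega"
    using Sym_omega_inv by auto
  fix V assume V: "openin (subtopology pointwise_top Sym_omega) V"
  show "openin (subtopology pointwise_top Sym_omega) {x \<in> Sym_omega. inv x \<in> V}"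
    unfolding open_sub
  proof (intro conjI ballI)
    show "{x \<in> Sym_omega. inv x \<in> V} \<subseteq> Sym_omega" by blast
    fix s assume s: "s \<in> {x \<in> Sym_omega. inv x \<in> V}"
    then obtain F where F: "finite F" "{g\<in>Sym_omega. \<forall>x\<in>F. g x = inv s x} \<subseteq> V"
      using V unfolding open_sub by blast
    have bs: "bij s" using s Sym_omega_bij by blast
    have "{g\<in>Sym_omega. \<forall>x\<in>inv s ` F. g x = s x} \<subseteq> {x \<in> Sym_omega. inv x \<in> V}"
    proof
      fix g assume g: "g \<in> {g\<in>Sym_omega. \<forall>x\<in>inv s ` F. g x = s x}"
      have bg: "bij g" using g Sym_omega_bij by blast
      have "\<forall>x\<in>F. inv g x = inv s x"
      proof
        fix x assume "x \<in> F"
        then have "g (inv s x) = s (inv s x)" using g by blast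
        also have "\<dots> = x" using bs by (simp add: bij_is_surj surj_f_inv_f)
        finally show "inv g x = inv s x" using bij_inv_eq_iff[OF bg, of "inv s x" x] by simp
      qed
      moreover have "inv g \<in> Sym_omega" using g Sym_omega_inv by blast
      ultimately have "inv g \<in> V" using F(2) by blast
      then show "g \<in> {x \<in> Sym_omega. inv x \<in> V}" using g by blast
    qed
    then show "\<exists>F'. finite F' \<and> {g\<in>Sym_omega. \<forall>x\<in>F'. g x = s x} \<subseteq> {x \<in> Sym_omega. inv x \<in> V}"
      using finite_imageI[OF F(1)] by blast
  qed
qed

lemma union_G: "(\<Union>D\<in>{D :: 'a set. countable D}. topspace (G_top D)) = Sym_omega"
proof
  show "(\<Union>D\<in>{D :: 'a set. countable D}. topspace (G_top D)) \<subseteq> Sym_omega"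
    unfolding G_top_eq top_sub G_def Sym_omega_def using countable_subset by blast
  show "Sym_omega \<subseteq> (\<Union>D\<in>{D :: 'a set. countable D}. topspace (G_top D))"
  proof
    fix f :: "'a \<Rightarrow> 'a" assume f: "f \<in> Sym_omega"
    then have "f \<in> topspace (G_top (supp f))" "countable (supp f)"
      unfolding G_top_eq top_sub G_def Sym_omega_def by auto
    then show "f \<in> (\<Union>D\<in>{D :: 'a set. countable D}. topspace (G_top D))" by blast
  qed
qed

lemma colim_openin: "openin (colim_topology I X) = colim_open I X"
  unfolding colim_topology_def by (simp add: istopology_colim_open)

lemma chain_finite:
  assumes "incseq (A :: nat \<Rightarrow> 'b set)" "finite F"
  shows "F \<subseteq> (\<Union>n. A n) \<Longrightarrow> \<exists>n. F \<subseteq> A n"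
  using assms(2)
proof (induction F rule: finite_induct)
  case empty then show ?case by simp
next
  case (insert x F)
  then obtain n where n: "F \<subseteq> A n" by blast
  obtain m where m: "x \<in> A m" using insert.prems by blast
  have "A n \<subseteq> A (max n m)" "A m \<subseteq> A (max n m)"
    using assms(1) by (simp_all add: incseqD)
  then have "insert x F \<subseteq> A (max n m)" using n m by blast
  then show ?case by blast
qed

lemma hard_dir:
  assumes U: "U \<subseteq> Sym_omega"
    and op: "\<And>D. countable D \<Longrightarrow> openin (subtopology pointwise_top (G D)) (U \<inter> G D)"
    and s: "\<sigma> \<in> U"
  shows "\<exists>F. finite F \<and> {g\<in>Sym_omega. \<forall>x\<in>F. g x = \<sigma> x} \<subseteq> U"
proof (rule ccontr)
  assume "\<not> ?thesis"
  then have ex: "\<And>F. finite F \<Longrightarrow> \<exists>\<tau>. \<tau> \<in> Sym_omega \<and> (\<forall>x\<in>F. \<tau> x = \<sigma> x) \<and> \<tau> \<notin> U"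
    by blast
  define t where "t F = (SOME \<tau>. \<tau> \<in> Sym_omega \<and> (\<forall>x\<in>F. \<tau> x = \<sigma> x) \<and> \<tau> \<notin> U)" for F
  have t: "t F \<in> Sym_omega \<and> (\<forall>x\<in>F. t F x = \<sigma> x) \<and> t F \<notin> U" if "finite F" for F
    unfolding t_def using someI_ex[OF ex[OF that]] .
  define Dn where "Dn = rec_nat (supp \<sigma>) (\<lambda>n A. A \<union> (\<Union>F\<in>{F. finite F \<and> F \<subseteq> A}. supp (t F)))"
  have Dn0: "Dn 0 = supp \<sigma>" unfolding Dn_def by simp
  have DnS: "Dn (Suc n) = Dn n \<union> (\<Union>F\<in>{F. finite F \<and> F \<subseteq> Dn n}. supp (t F))" for n
    unfolding Dn_def by simp
  have sS: "\<sigma> \<in> Sym_omega" using s U by blast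
  have cDn: "countable (Dn n)" for n
  proof (induction n)
    case 0 then show ?case using sS unfolding Dn0 Sym_omega_def by simp
  next
    case (Suc n)
    have "countable (supp (t F))" if "F \<in> {F. finite F \<and> F \<subseteq> Dn n}" for F
      using t[of F] that unfolding Sym_omega_def by simp
    then have "countable (\<Union>F\<in>{F. finite F \<and> F \<subseteq> Dn n}. supp (t F))"
      using countable_Collect_finite_subset[OF Suc.IH] by (intro countable_UN) auto
    then show ?case unfolding DnS using Suc.IH by simp
  qed
  have inc: "incseq Dn"
    by (rule incseq_SucI) (simp add: DnS)
  define D where "D = (\<Union>n. Dn n)"
  have cD: "countable D" unfolding D_def using cDn by (intro countable_UN) auto
  have sG: "\<sigma> \<in> G D" using sS Dn0 unfolding G_def Sym_omega_def D_def by auto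
  have "\<sigma> \<in> U \<inter> G D" using s sG by blast
  then obtain F where F: "finite F" "{g\<in>G D. \<forall>x\<in>F. g x = \<sigma> x} \<subseteq> U \<inter> G D"
    using op[OF cD] unfolding open_sub by blast
  have "finite (F \<inter> D)" using F(1) by simp
  moreover have "F \<inter> D \<subseteq> (\<Union>n. Dn n)" unfolding D_def by blast
  ultimately obtain n where n: "F \<inter> D \<subseteq> Dn n" using chain_finite[OF inc] by blast
  let ?\<tau> = "t (F \<inter> D)"
  have tau: "?\<tau> \<in> Sym_omega" "\<forall>x\<in>F \<inter> D. ?\<tau> x = \<sigma> x" "?\<tau> \<notin> U"
    using t[OF \<open>finite (F \<inter> D)\<close>] by auto
  have "supp ?\<tau> \<subseteq> Dn (Suc n)" unfolding DnS using n \<open>finite (F \<inter> D)\<close> by blast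
  also have "Dn (Suc n) \<subseteq> D" unfolding D_def by blast
  finally have suppD: "supp ?\<tau> \<subseteq> D" .
  then have tG: "?\<tau> \<in> G D" using tau(1) unfolding G_def Sym_omega_def by auto
  have "\<forall>x\<in>F. ?\<tau> x = \<sigma> x"
  proof
    fix x assume x: "x \<in> F"
    show "?\<tau> x = \<sigma> x"
    proof (cases "x \<in> D")
      case True then show ?thesis using tau(2) x by blast
    next
      case False
      then have "x \<notin> supp ?\<tau>" "x \<notin> supp \<sigma>" using suppD sG unfolding G_def by auto
      then show ?thesis unfolding supp_def by simp
    qed
  qed
  then have "?\<tau> \<in> U" using tG F(2) by blast
  then show False using tau(3) by contradiction
qed

lemma colim_eq: "colim_topology {D :: 'a set. countable D} G_top = Sym_omega_top"
proof (rule topology_eq[THEN iffD2], intro allI)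
  fix U :: "('a \<Rightarrow> 'a) set"
  show "openin (colim_topology {D :: 'a set. countable D} G_top) U = openin Sym_omega_top U"
    unfolding colim_openin colim_open_def union_G
  proof
    assume h: "U \<subseteq> Sym_omega \<and> (\<forall>i\<in>{D :: 'a set. countable D}. openin (G_top i) (U \<inter> topspace (G_top i)))"
    have op: "openin (subtopology pointwise_top (G D)) (U \<inter> G D)" if "countable D" for D
      using h that unfolding G_top_eq top_sub by blast
    show "openin Sym_omega_top U"
      unfolding Sym_omega_top_eq open_sub
      using h hard_dir[of U, OF _ op] by blast
  next
    assume h: "openin Sym_omega_top U"
    then have U: "U \<subseteq> Sym_omega" and nb: "\<forall>f\<in>U. \<exists>F. finite F \<and> {g\<in>Sym_omega. \<forall>x\<in>F. g x = f x} \<subseteq> U"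
      unfolding Sym_omega_top_eq open_sub by blast+
    have "openin (G_top D) (U \<inter> topspace (G_top D))" if "countable D" for D
      unfolding G_top_eq top_sub open_sub
    proof (intro conjI ballI)
      show "U \<inter> G D \<subseteq> G D" by blast
      fix f assume f: "f \<in> U \<inter> G D"
      then obtain F where F: "finite F" "{g\<in>Sym_omega. \<forall>x\<in>F. g x = f x} \<subseteq> U" using nb by blast
      have "G D \<subseteq> Sym_omega" unfolding G_def Sym_omega_def using that countable_subset by blast
      then have "{g\<in>G D. \<forall>x\<in>F. g x = f x} \<subseteq> U \<inter> G D" using F(2) by blast
      then show "\<exists>F. finite F \<and> {g\<in>G D. \<forall>x\<in>F. g x = f x} \<subseteq> U \<inter> G D" using F(1) by blast
    qed
    then show "U \<subseteq> Sym_omega \<and> (\<forall>i\<in>{D :: 'a set. countable D}. openin (G_top i) (U \<inter> topspace (G_top i)))"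
      using U by blast
  qed
qed

theorem corollary2p7:
  shows "ACP {D :: 'a set. countable D} G_top \<and>
         colim_topology {D :: 'a set. countable D} G_top = Sym_omega_top"
proof
  show ceq: "colim_topology {D :: 'a set. countable D} G_top = Sym_omega_top" by (rule colim_eq)
  have pg: "perm_group_topology Sym_omega Sym_omega_top"
    unfolding perm_group_topology_def
    using comp_cont inv_cont by (simp add: Sym_omega_top_eq top_sub top_pw)
  have ci: "continuous_map (G_top D) Sym_omega_top id" if "countable D" for D :: "'a set"
  proof -
    have "G D \<subseteq> Sym_omega" unfolding G_def Sym_omega_def using that countable_subset by blast
    then have e: "Sym_omega \<inter> G D = G D" by auto
    have "G_top D = subtopology Sym_omega_top (G D)"
      unfolding G_top_eq Sym_omega_top_eq subtopology_subtopology e ..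
    then show ?thesis by (simp add: continuous_map_from_subtopology)
  qed
  have fin: "openin (colim_topology {D :: 'a set. countable D} G_top) U"
    if T: "perm_group_topology Sym_omega T" "\<forall>i\<in>{D :: 'a set. countable D}. continuous_map (G_top i) T id"
      and U: "openin T U" for T U
    unfolding colim_openin colim_open_def union_G
  proof (intro conjI ballI)
    show "U \<subseteq> Sym_omega" using openin_subset[OF U] T(1) unfolding perm_group_topology_def by simp
    fix D :: "'a set" assume D: "D \<in> {D. countable D}"
    have "openin (G_top D) {x \<in> topspace (G_top D). id x \<in> U}"
      using T(2) D U unfolding continuous_map_def by blast
    moreover have "{x \<in> topspace (G_top D). id x \<in> U} = U \<inter> topspace (G_top D)" by auto
    ultimately show "openin (G_top D) (U \<inter> topspace (G_top D))" by simp
  qed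
  show "ACP {D :: 'a set. countable D} G_top"
    unfolding ACP_def Let_def union_G ceq
    using pg ci fin[unfolded ceq] by blast
qed

end
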